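(* Let $p$ be an odd prime, $\omega=e^{2\pi i/p}$, $m\ge1$, $Q=T_{(p^m)}$ and $K=K_Q(p)$. Let $M=S_\xi X^b$ and $M'=S_{\xi'}X^{b'}$ be elements of $K$ (with $S_\xi,S_{\xi'}\in Q$, $b,b'\in\mathbb{Z}_p$) such that $[M,M']=\omega^c\mathbbm{1}$ for some $c\in\mathbb{Z}_p$. Then: (1) if $b=b'=0$, then $c=0$; (2) if $b\neq0$, then $M'=S_{\chi'}M^{b'/b}$ where $\chi'(q)=\omega^{\alpha'_0+\alpha'_1q}$ for some $\alpha'_0,\alpha'_1\in\mathbb{Z}_p$, and $c=-b\alpha'_1$; (3) if $b'\neq0$, then $M=S_\chi M'^{\,b/b'}$ where $\chi(q)=\omega^{\alpha_0+\alpha_1q}$ for some $\alpha_0,\alpha_1\in\mathbb{Z}_p$, and $c=b'\alpha_1$.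
   Context: Let $\{|q\rangle:q\in\mathbb{Z}_p\}$ be the computational basis of $\mathbb{C}^p$ and $X|q\rangle=|q+1\rangle$. For $\xi:\mathbb{Z}_p\to U(1)$ let $S_\xi=\mathrm{diag}(\xi(0),\dots,\xi(p-1))$. $T=\{S_\xi:\prod_{q}\xi(q)=1\}$ and $T_{(p^k)}=\{S\in T:S^{p^k}=\mathbbm{1}\}$. $K_Q(p)$ is the subgroup of $SU(p)$ generated by all $S_\xi X^b$ with $S_\xi\in Q$, $b\in\mathbb{Z}_p$. The commutator is $[A,B]=ABA^{-1}B^{-1}$. For $b\neq 0$, $b'/b$ denotes $b'b^{-1}\in\mathbb{Z}_p$, used as an exponent via a representative in $\{0,\dots,p-1\}$. *)

theory Defs
  imports "Jordan_Normal_Form.Matrix" "HOL-Number_Theory.Cong"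
begin

text \<open>Operators on C^p are p x p complex matrices; the basis vector |q> is the
 q-th standard basis vector, q in {0..<p} representing Z_p.\<close>

definition omega :: "nat \<Rightarrow> complex" where
  "omega p = cis (2 * pi / real p)"

definition Xmat :: "nat \<Rightarrow> complex mat" where
  "Xmat p = mat p p (\<lambda>(i, j). if i = (j + 1) mod p then 1 else 0)"

definition Smat :: "nat \<Rightarrow> (nat \<Rightarrow> complex) \<Rightarrow> complex mat" where
  "Smat p \<xi> = mat p p (\<lambda>(i, j). if i = j then \<xi> i else 0)"

definition U1fun :: "nat \<Rightarrow> (nat \<Rightarrow> complex) \<Rightarrow> bool" where
  "U1fun p \<xi> \<longleftrightarrow> (\<forall>q<p. cmod (\<xi> q) = 1)"

definition T_set :: "nat \<Rightarrow> complex mat set" where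
  "T_set p = {Smat p \<xi> | \<xi>. U1fun p \<xi> \<and> (\<Prod>q<p. \<xi> q) = 1}"

definition T_tors :: "nat \<Rightarrow> nat \<Rightarrow> complex mat set" where
  "T_tors p k = {S \<in> T_set p. S ^\<^sub>m k = 1\<^sub>m p}"

definition minv :: "nat \<Rightarrow> complex mat \<Rightarrow> complex mat" where
  "minv p A = (SOME B. B \<in> carrier_mat p p \<and> A * B = 1\<^sub>m p \<and> B * A = 1\<^sub>m p)"

definition commutator :: "nat \<Rightarrow> complex mat \<Rightarrow> complex mat \<Rightarrow> complex mat" where
  "commutator p A B = A * B * minv p A * minv p B"

inductive_set K_grp :: "nat \<Rightarrow> complex mat set \<Rightarrow> complex mat set" for p Q where
  gen: "\<lbrakk>Smat p \<xi> \<in> Q; b < p\<rbrakk> \<Longrightarrow> Smat p \<xi> * Xmat p ^\<^sub>m b \<in> K_grp p Q"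
| one: "1\<^sub>m p \<in> K_grp p Q"
| mult: "\<lbrakk>A \<in> K_grp p Q; B \<in> K_grp p Q\<rbrakk> \<Longrightarrow> A * B \<in> K_grp p Q"
| inv: "A \<in> K_grp p Q \<Longrightarrow> minv p A \<in> K_grp p Q"

definition zinv :: "nat \<Rightarrow> nat \<Rightarrow> nat" where
  "zinv p b = (SOME x. x < p \<and> [b * x = 1] (mod p))"

definition zdiv :: "nat \<Rightarrow> nat \<Rightarrow> nat \<Rightarrow> nat" where
  "zdiv p b' b = (b' * zinv p b) mod p"

end

theory Submission
  imports Defs
begin


definition mm :: "nat \<Rightarrow> (nat \<Rightarrow> complex) \<Rightarrow> nat \<Rightarrow> complex mat" where
 "mm p f b = mat p p (\<lambda>(i,j). if i = (j + b) mod p then f i else 0)"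

definition sh :: "nat \<Rightarrow> nat \<Rightarrow> nat \<Rightarrow> nat" where
 "sh p b i = (i + p - b mod p) mod p"

lemma mm_carrier[simp]: "mm p f b \<in> carrier_mat p p" by (simp add: mm_def)
lemma mm_dim[simp]: "dim_row (mm p f b) = p" "dim_col (mm p f b) = p" by (simp_all add: mm_def)

lemma sh_lt: "p > 0 \<Longrightarrow> sh p b i < p" by (simp add: sh_def)

lemma A1: assumes "p > 0" "i < p" shows "(sh p b i + b) mod p = i"
proof -
  have "(sh p b i + b) mod p = (i + p - b mod p + b) mod p" by (simp add: sh_def mod_add_left_eq)
  also have "\<dots> = (i + p - b mod p + b mod p) mod p" by (simp add: mod_add_right_eq)
  also have "\<dots> = (i + p) mod p"
  proof -
    have "b mod p < p" using assms by simp
    then have "i + p - b mod p + b mod p = i + p" by linarith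
    then show ?thesis by simp
  qed
  finally show ?thesis using assms by simp
qed

lemma A2: assumes "p > 0" "x < p" "i = (x + b) mod p" shows "x = sh p b i"
proof -
  have "sh p b i = ((x + b) mod p + p - b mod p) mod p" by (simp add: sh_def assms)
  also have "\<dots> = ((x + b mod p) mod p + p - b mod p) mod p" by (simp add: mod_add_right_eq)
  also have "\<dots> = x"
  proof (cases "x + b mod p < p")
    case True thus ?thesis using assms by simp
  next
    case False
    have bm: "b mod p < p" using assms(1) by simp
    have "(x + b mod p) mod p = (x + b mod p - p) mod p" using False by (simp add: le_mod_geq)
    also have "\<dots> = x + b mod p - p"
    proof -
      have "x + b mod p - p < p" using assms(2) bm False by linarith
      then show ?thesis by simp
    qed
    finally have "(x + b mod p) mod p = x + b mod p - p" .
    then show ?thesis using False assms by simp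
  qed
  finally show ?thesis by simp
qed

lemma A4: assumes "p > 0" shows "sh p (p - b mod p) i = (i + b) mod p"
proof (cases "b mod p = 0")
  case True thus ?thesis using assms by (simp add: sh_def mod_add_right_eq[symmetric, of i b] )
next
  case False
  then have "(p - b mod p) mod p = p - b mod p" using assms by simp
  then show ?thesis using False assms by (simp add: sh_def) (metis mod_add_right_eq)
qed

lemma mm_mult: "mm p f b * mm p g d = mm p (\<lambda>i. f i * g (sh p b i)) (b + d)"
proof (rule eq_matI)
  fix i j assume ij: "i < dim_row (mm p (\<lambda>i. f i * g (sh p b i)) (b + d))" "j < dim_col (mm p (\<lambda>i. f i * g (sh p b i)) (b + d))"
  then have i: "i < p" and j: "j < p" by auto
  then have p: "p > 0" by simp
  define x where "x = (j + d) mod p"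
  have x: "x < p" using p by (simp add: x_def)
  have "(mm p f b * mm p g d) $$ (i, j) = (\<Sum>k\<in>{0..<p}. (if i = (k + b) mod p then f i else 0) * (if k = x then g k else 0))"
    using i j by (simp add: mm_def scalar_prod_def x_def)
  also have "\<dots> = (if i = (x + b) mod p then f i else 0) * g x"
    by (subst sum.mono_neutral_cong_right[of "{0..<p}" "{x}"]) (use x in auto)
  also have "\<dots> = mm p (\<lambda>i. f i * g (sh p b i)) (b + d) $$ (i, j)"
  proof -
    have "(x + b) mod p = ((j + d) + b) mod p" by (simp add: x_def mod_add_left_eq)
    then have e: "(x + b) mod p = (j + (b + d)) mod p" by (simp add: add_ac)
    show ?thesis using i j A2[OF p x, of i b] by (auto simp: mm_def e)
  qed
  finally show "(mm p f b * mm p g d) $$ (i, j) = mm p (\<lambda>i. f i * g (sh p b i)) (b + d) $$ (i, j)" .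
qed auto

lemma mm_cong: assumes "\<And>i. i < p \<Longrightarrow> f i = g i" "b mod p = d mod p" shows "mm p f b = mm p g d"
proof -
  have e: "(j + b) mod p = (j + d) mod p" for j by (metis assms(2) mod_add_right_eq)
  show ?thesis by (rule eq_matI) (auto simp: mm_def e assms(1))
qed

lemma mm_entry: "i < p \<Longrightarrow> p > 0 \<Longrightarrow> mm p f d $$ (i, sh p d i) = f i"
  using A1[of p i d] by (simp add: mm_def sh_lt)

lemma mm_eq: assumes "mm p f d = mm p g d" "i < p" shows "f i = g i"
proof -
  have p: "p > 0" using assms by simp
  have "mm p f d $$ (i,sh p d i) = mm p g d $$ (i,sh p d i)" using assms by simp
  then show ?thesis using mm_entry[OF assms(2) p] by simp
qed

lemma mm_one: "(\<And>i. i < p \<Longrightarrow> f i = 1) \<Longrightarrow> b mod p = 0 \<Longrightarrow> mm p f b = 1\<^sub>m p"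
  by (rule eq_matI) (auto simp: mm_def)

lemma Smat_mm: "Smat p \<xi> = mm p \<xi> 0"
  by (rule eq_matI) (auto simp: mm_def Smat_def)

lemma Xpow_mm: "Xmat p ^\<^sub>m n = mm p (\<lambda>_. 1) n"
proof (induction n)
  case 0 show ?case by (simp add: Xmat_def mm_one)
next
  case (Suc n)
  have X: "Xmat p = mm p (\<lambda>_. 1) 1" by (simp add: Xmat_def mm_def)
  have "Xmat p ^\<^sub>m Suc n = Xmat p ^\<^sub>m n * Xmat p" by simp
  also have "\<dots> = mm p (\<lambda>_. 1) n * Xmat p" using Suc.IH by simp
  also have "\<dots> = mm p (\<lambda>_. 1) n * mm p (\<lambda>_. 1) 1" using X by simp
  also have "\<dots> = mm p (\<lambda>_. 1) (Suc n)" by (simp add: mm_mult)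
  finally show ?case .
qed

lemma SX_mm: "Smat p \<xi> * Xmat p ^\<^sub>m b = mm p \<xi> b"
  by (simp add: Smat_mm Xpow_mm mm_mult)

lemma smult_mm: "a \<cdot>\<^sub>m mm p f b = mm p (\<lambda>i. a * f i) b"
  by (rule eq_matI) (auto simp: mm_def)


lemma A1': "p > 0 \<Longrightarrow> x < p \<Longrightarrow> sh p b ((x + b) mod p) = x"
  using A2[of p x "(x + b) mod p" b] by simp

lemma sh_mod: "d mod p = d' mod p \<Longrightarrow> sh p d = sh p d'"
  by (auto simp: sh_def)

lemma sh0: "i < p \<Longrightarrow> sh p 0 i = i"
  by (simp add: sh_def)

lemma prod_sh: assumes "p > 0" shows "(\<Prod>i<p. f (sh p d i)) = (\<Prod>i<p. (f i :: complex))"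
  by (rule prod.reindex_bij_witness[where i="\<lambda>i. (i+d) mod p" and j="sh p d"])
     (use assms in \<open>auto simp: A1 A1' sh_lt\<close>)

fun pw :: "nat \<Rightarrow> (nat \<Rightarrow> complex) \<Rightarrow> nat \<Rightarrow> nat \<Rightarrow> (nat \<Rightarrow> complex)" where
  "pw p f b 0 = (\<lambda>_. 1)"
| "pw p f b (Suc n) = (\<lambda>i. pw p f b n i * f (sh p (n * b) i))"

lemma mm_pow: "mm p f b ^\<^sub>m n = mm p (pw p f b n) (n * b)"
proof (induction n)
  case 0 show ?case by (simp add: mm_one)
next
  case (Suc n)
  have "mm p f b ^\<^sub>m Suc n = mm p (pw p f b n) (n * b) * mm p f b" using Suc.IH by simp
  also have "\<dots> = mm p (\<lambda>i. pw p f b n i * f (sh p (n*b) i)) (n*b + b)" by (rule mm_mult)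
  also have "\<dots> = mm p (pw p f b (Suc n)) (Suc n * b)" by (simp add: add.commute)
  finally show ?case .
qed

lemma pw_prod: assumes "p > 0" "(\<Prod>i<p. f i) = 1" shows "(\<Prod>i<p. pw p f b n i) = 1"
proof (induction n)
  case 0 show ?case by simp
next
  case (Suc n)
  have "(\<Prod>i<p. pw p f b (Suc n) i) = (\<Prod>i<p. pw p f b n i) * (\<Prod>i<p. f (sh p (n * b) i))"
    by (simp add: prod.distrib)
  also have "\<dots> = 1" using Suc.IH prod_sh[OF assms(1), of f] assms(2) by simp
  finally show ?case .
qed




lemma mm_inv: assumes p: "p > 0" and nz: "\<And>i. i < p \<Longrightarrow> f i \<noteq> 0"
  shows "\<exists>B. B \<in> carrier_mat p p \<and> mm p f b * B = 1\<^sub>m p \<and> B * mm p f b = 1\<^sub>m p"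
proof (intro exI conjI)
  let ?B = "mm p (\<lambda>k. 1 / f ((k + b) mod p)) (p - b mod p)"
  show "?B \<in> carrier_mat p p" by simp
  have m1: "(b + (p - b mod p)) mod p = 0"
  proof -
    have "b mod p < p" using p by simp
    have d: "b = p * (b div p) + b mod p" by simp
    have "b + (p - b mod p) = p * (b div p) + p" using d \<open>b mod p < p\<close> by linarith
    also have "\<dots> = p * (b div p + 1)" by simp
    finally show ?thesis by simp
  qed
  show "mm p f b * ?B = 1\<^sub>m p"
    unfolding mm_mult by (rule mm_one) (use A1[OF p] nz m1 in auto)
  show "?B * mm p f b = 1\<^sub>m p"
    unfolding mm_mult by (rule mm_one) (use A4[OF p] nz m1 p in \<open>auto simp: add.commute\<close>)
qed

lemma minv_props: assumes "\<exists>B. B \<in> carrier_mat p p \<and> A * B = 1\<^sub>m p \<and> B * A = 1\<^sub>m p"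
  shows "minv p A \<in> carrier_mat p p \<and> A * minv p A = 1\<^sub>m p \<and> minv p A * A = 1\<^sub>m p"
  unfolding minv_def by (rule someI_ex[OF assms])

lemma comm_eq:
  assumes A: "A \<in> carrier_mat p p" and B: "B \<in> carrier_mat p p"
    and iA: "minv p A \<in> carrier_mat p p" "minv p A * A = 1\<^sub>m p"
    and iB: "minv p B \<in> carrier_mat p p" "minv p B * B = 1\<^sub>m p"
    and c: "commutator p A B = s \<cdot>\<^sub>m 1\<^sub>m p"
  shows "A * B = s \<cdot>\<^sub>m (B * A)"
proof -
  let ?NA = "minv p A" and ?NB = "minv p B"
  have h1: "?NB * (B * A) = A"
  proof -
    have "?NB * (B * A) = (?NB * B) * A" by (rule assoc_mult_mat[OF iB(1) B A, symmetric])
    also have "\<dots> = 1\<^sub>m p * A" by (simp only: iB(2))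
    also have "\<dots> = A" by (rule left_mult_one_mat[OF A])
    finally show ?thesis .
  qed
  have h2: "A * B * ?NA * A = A * B"
  proof -
    have AB: "A * B \<in> carrier_mat p p" using A B by simp
    have "A * B * ?NA * A = A * B * (?NA * A)" by (rule assoc_mult_mat[OF AB iA(1) A])
    also have "\<dots> = A * B * 1\<^sub>m p" by (simp only: iA(2))
    also have "\<dots> = A * B" by (rule right_mult_one_mat[OF AB])
    finally show ?thesis .
  qed
  have ABN: "A * B * ?NA \<in> carrier_mat p p" using A B iA by simp
  have "A * B * ?NA * ?NB * (B * A) = A * B * ?NA * (?NB * (B * A))"
    by (rule assoc_mult_mat[OF ABN iB(1) mult_carrier_mat[OF B A]])
  also have "\<dots> = A * B" by (simp only: h1 h2)
  finally have "A * B = commutator p A B * (B * A)" unfolding commutator_def by simp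
  also have "\<dots> = s \<cdot>\<^sub>m (1\<^sub>m p * (B * A))" unfolding c
    by (rule mult_smult_assoc_mat) (use A B in auto)
  also have "\<dots> = s \<cdot>\<^sub>m (B * A)" using A B by simp
  finally show ?thesis .
qed

lemma omega_pow: "p > 0 \<Longrightarrow> omega p ^ k = cis (2 * pi * real k / real p)"
  by (simp add: omega_def DeMoivre) (simp add: field_simps)

lemma omega_p: "p > 0 \<Longrightarrow> omega p ^ p = 1"
  by (simp add: omega_pow)

lemma omega_mod: assumes "p > 0" shows "omega p ^ x = omega p ^ (x mod p)"
proof -
  have e: "omega p ^ x = (omega p ^ p) ^ (x div p) * omega p ^ (x mod p)"
    by (simp only: power_mult[symmetric] power_add[symmetric] mult_div_mod_eq)
  then show ?thesis using omega_p[OF assms] by simp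
qed

lemma omega_cong: "p > 0 \<Longrightarrow> [x = y] (mod p) \<Longrightarrow> omega p ^ x = omega p ^ y"
  by (metis omega_mod cong_def)

lemma omega_inj: assumes "p > 0" "x < p" "y < p" "omega p ^ x = omega p ^ y" shows "x = y"
  using bij_betw_roots_unity[OF assms(1)] assms unfolding bij_betw_def inj_on_def
  by (simp add: omega_pow)

lemma omega_root: assumes "p > 0" "z ^ p = 1" shows "\<exists>a<p. z = omega p ^ a"
proof -
  have "z \<in> (\<lambda>k. cis (2 * pi * real k / real p)) ` {..<p}"
    using bij_betw_roots_unity[OF assms(1)] assms(2) unfolding bij_betw_def by auto
  then show ?thesis using omega_pow[OF assms(1)] by auto
qed

lemma zinv_props: assumes "prime p" "0 < b" "b < p" shows "zinv p b < p \<and> [b * zinv p b = 1] (mod p)"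
proof -
  have "coprime b p" using assms
    by (metis coprime_commute not_less prime_imp_coprime_nat dvd_imp_le)
  then obtain x where x: "[b * x = Suc 0] (mod p)" using cong_solve_coprime_nat by blast
  have "x mod p < p \<and> [b * (x mod p) = 1] (mod p)" using x assms
    by (metis One_nat_def cong_def mod_mult_right_eq prime_gt_0_nat mod_less_divisor)
  then show ?thesis unfolding zinv_def by (rule someI)
qed

lemma gauss_odd: assumes "odd (p::nat)" shows "p dvd (\<Sum>j<p. j)"
proof -
  obtain k where k: "p = Suc (2 * k)" using assms by (metis oddE Suc_eq_plus1 add.commute)
  have "(\<Sum>j<p. j) = \<Sum>{0..2*k}" unfolding k by (simp add: lessThan_Suc_atMost atLeast0AtMost)
  also have "\<dots> = k * p" unfolding gauss_sum_nat k by simp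
  finally show ?thesis by simp
qed




lemma T_props: assumes "Smat p \<xi> \<in> T_tors p k"
  shows "(\<forall>i<p. \<xi> i \<noteq> 0) \<and> (\<Prod>i<p. \<xi> i) = 1"
proof -
  obtain \<xi>0 where e: "Smat p \<xi> = Smat p \<xi>0" and u: "U1fun p \<xi>0" and pr: "(\<Prod>q<p. \<xi>0 q) = 1"
    using assms unfolding T_tors_def T_set_def by blast
  have eq: "\<xi> i = \<xi>0 i" if "i < p" for i using mm_eq[of p \<xi> 0 \<xi>0 i] e that by (simp add: Smat_mm)
  have "\<xi>0 i \<noteq> 0" if "i < p" for i using u that unfolding U1fun_def by fastforce
  then have "\<forall>i<p. \<xi> i \<noteq> 0" using eq by simp
  moreover have "(\<Prod>i<p. \<xi> i) = 1" using pr eq by simp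
  ultimately show ?thesis by blast
qed

lemma pow_comm: assumes "A \<in> carrier_mat n n" shows "A * A ^\<^sub>m k = A ^\<^sub>m k * A"
proof (induction k)
  case 0 then show ?case using assms by simp
next
  case (Suc k)
  have "A * A ^\<^sub>m Suc k = A * (A ^\<^sub>m k * A)" by simp
  also have "\<dots> = (A * A ^\<^sub>m k) * A" using assms by (metis assoc_mult_mat pow_carrier_mat)
  also have "\<dots> = (A ^\<^sub>m k * A) * A" using Suc.IH by simp
  also have "\<dots> = A ^\<^sub>m Suc k * A" by simp
  finally show ?case .
qed

lemma pw_nz: assumes "p > 0" "\<And>i. i < p \<Longrightarrow> f i \<noteq> 0" "i < p" shows "pw p f b n i \<noteq> 0"
  using assms(3) by (induction n arbitrary: i) (auto simp: assms sh_lt)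

lemma core:
  fixes \<xi> \<xi>' \<eta> :: "nat \<Rightarrow> complex"
  assumes p: "prime p" "odd p" and b: "0 < b" "b < p" and b': "b' < p"
    and nzx: "\<And>i. i<p \<Longrightarrow> \<xi> i \<noteq> 0" and nzh: "\<And>i. i<p \<Longrightarrow> \<eta> i \<noteq> 0"
    and pr': "(\<Prod>i<p. \<xi>' i) = 1" and prh: "(\<Prod>i<p. \<eta> i) = 1"
    and E: "\<And>i. i<p \<Longrightarrow> omega p ^ d * (\<xi> i * \<xi>' (sh p b i)) = omega p ^ e * (\<xi>' i * \<xi> (sh p b' i))"
    and F: "\<And>i. i<p \<Longrightarrow> \<xi> i * \<eta> (sh p b i) = \<eta> i * \<xi> (sh p b' i)"
  shows "\<exists>a0 a1. a0 < p \<and> a1 < p \<and> (\<forall>q<p. \<xi>' q = omega p ^ (a0 + a1 * q) * \<eta> q) \<and> [e + b * a1 = d] (mod p)"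
proof -
  have p0: "p > 0" using prime_gt_0_nat[OF p(1)] .
  have p1: "p > 1" using prime_gt_1_nat[OF p(1)] .
  define \<omega> where "\<omega> = omega p"
  define \<chi> where "\<chi> q = \<xi>' q / \<eta> q" for q
  have ce: "\<chi> k * \<eta> k = \<xi>' k" if "k<p" for k using nzh[OF that] by (simp add: \<chi>_def)
  have R: "\<chi> (sh p b i) * \<omega>^d = \<omega>^e * \<chi> i" if i: "i<p" for i
  proof -
    have s1: "sh p b i < p" "sh p b' i < p" using p0 by (auto simp: sh_lt)
    have "\<chi> (sh p b i) * \<omega>^d * (\<eta> (sh p b i) * \<xi> i) = \<omega>^d * (\<xi> i * (\<chi> (sh p b i) * \<eta> (sh p b i)))"
      by (simp add: mult_ac)
    also have "\<dots> = \<omega>^d * (\<xi> i * \<xi>' (sh p b i))" using ce[OF s1(1)] by simp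
    also have "\<dots> = \<omega>^e * (\<xi>' i * \<xi> (sh p b' i))" using E[OF i] by (simp add: \<omega>_def)
    also have "\<dots> = \<omega>^e * ((\<chi> i * \<eta> i) * \<xi> (sh p b' i))" using ce[OF i] by simp
    also have "\<dots> = \<omega>^e * \<chi> i * (\<eta> i * \<xi> (sh p b' i))" by (simp add: mult_ac)
    also have "\<eta> i * \<xi> (sh p b' i) = \<eta> (sh p b i) * \<xi> i" using F[OF i] by (simp add: mult.commute)
    finally have "(\<chi> (sh p b i) * \<omega>^d) * (\<eta> (sh p b i) * \<xi> i) = (\<omega>^e * \<chi> i) * (\<eta> (sh p b i) * \<xi> i)" .
    moreover have "\<eta> (sh p b i) * \<xi> i \<noteq> 0" using nzh[OF s1(1)] nzx[OF i] by simp
    ultimately show ?thesis by (rule mult_right_cancel[THEN iffD1, rotated])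
  qed
  define r where "r j = (j * b) mod p" for j
  have rlt: "r j < p" for j using p0 by (simp add: r_def)
  have rs: "sh p b (r (Suc j)) = r j" for j
  proof -
    have "r (Suc j) = (j * b + b) mod p" by (simp add: r_def add.commute)
    also have "\<dots> = (r j + b) mod p" unfolding r_def by (rule mod_add_left_eq[symmetric])
    finally have "r (Suc j) = (r j + b) mod p" .
    then show ?thesis using A2[OF p0 rlt[of j]] by simp
  qed
  have iter: "\<chi> (r j) * \<omega>^(e*j) = \<chi> 0 * \<omega>^(d*j)" for j
  proof (induction j)
    case 0 show ?case by (simp add: r_def)
  next
    case (Suc j)
    have "\<chi> (r (Suc j)) * \<omega>^(e * Suc j) = (\<omega>^e * \<chi> (r (Suc j))) * \<omega>^(e*j)" by (simp add: power_add ac_simps)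
    also have "\<omega>^e * \<chi> (r (Suc j)) = \<chi> (r j) * \<omega>^d" using R[OF rlt[of "Suc j"]] rs[of j] by simp
    also have "\<chi> (r j) * \<omega>^d * \<omega>^(e*j) = \<chi> 0 * \<omega>^(d*j) * \<omega>^d" using Suc.IH by (simp add: ac_simps)
    also have "\<dots> = \<chi> 0 * \<omega>^(d * Suc j)" by (simp add: power_add ac_simps)
    finally show ?case .
  qed
  define s where "s = d + (p - 1) * e"
  have wp: "\<omega>^p = 1" using omega_p[OF p0] by (simp add: \<omega>_def)
  have chr: "\<chi> (r j) = \<chi> 0 * \<omega>^(s*j)" for j
  proof -
    have ee: "e*j + (p-1)*e*j = p*(e*j)" using p0 by (cases p) (auto simp: algebra_simps)
    have "\<omega>^(e*j) * \<omega>^((p-1)*e*j) = \<omega>^(e*j + (p-1)*e*j)" by (rule power_add[symmetric])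
    also have "\<dots> = \<omega>^(p*(e*j))" by (simp only: ee)
    also have "\<dots> = (\<omega>^p)^(e*j)" by (rule power_mult)
    also have "\<dots> = 1" by (simp add: wp)
    finally have "\<omega>^(e*j) * \<omega>^((p-1)*e*j) = 1" .
    then have "\<chi> (r j) = \<chi> (r j) * \<omega>^(e*j) * \<omega>^((p-1)*e*j)" by (simp add: mult.assoc)
    also have "\<dots> = \<chi> 0 * \<omega>^(d*j) * \<omega>^((p-1)*e*j)" using iter by simp
    also have "\<dots> = \<chi> 0 * \<omega>^(s*j)" by (simp add: s_def add_mult_distrib power_add mult.assoc)
    finally show ?thesis .
  qed
  obtain z where z: "z < p" "[b * z = 1] (mod p)" using zinv_props[OF p(1) b] by blast
  have cz: "(b * z) mod p = 1" using z p1 by (simp add: cong_def)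
  have inv1: "((x * b) mod p * z) mod p = x" if "x < p" for x
  proof -
    have "((x * b) mod p * z) mod p = (x * (b * z)) mod p" by (simp add: mod_mult_left_eq mult.assoc)
    also have "\<dots> = (x * ((b * z) mod p)) mod p" by (simp add: mod_mult_right_eq)
    finally show ?thesis using cz that by simp
  qed
  have inv2: "((x * z) mod p * b) mod p = x" if "x < p" for x
  proof -
    have "((x * z) mod p * b) mod p = (x * z * b) mod p" by (rule mod_mult_left_eq)
    also have "\<dots> = (x * (b * z)) mod p" by (simp add: ac_simps)
    also have "\<dots> = (x * ((b * z) mod p)) mod p" by (simp add: mod_mult_right_eq)
    finally show ?thesis using cz that by simp
  qed
  have "(\<Prod>j<p. \<chi> (r j)) = (\<Prod>q<p. \<chi> q)"
    by (rule prod.reindex_bij_witness[where i="\<lambda>q. (q * z) mod p" and j=r])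
       (use p0 in \<open>auto simp: r_def inv1 inv2\<close>)
  also have "(\<Prod>q<p. \<chi> q) = 1" using pr' prh by (simp add: \<chi>_def prod_dividef)
  finally have P1: "(\<Prod>j<p. \<chi> (r j)) = 1" .
  obtain t where t: "(\<Sum>j<p. j) = p * t" using gauss_odd[OF p(2)] by blast
  have "(\<Prod>j<p. \<chi> (r j)) = (\<Prod>j<p. \<chi> 0 * \<omega>^(s*j))" using chr by simp
  also have "\<dots> = \<chi> 0 ^ p * (\<Prod>j<p. \<omega>^(s*j))" by (simp add: prod.distrib)
  also have "(\<Prod>j<p. \<omega>^(s*j)) = \<omega>^(\<Sum>j<p. s*j)" by (rule power_sum[symmetric])
  also have "(\<Sum>j<p. s*j) = p * (s * t)" by (simp add: sum_distrib_left[symmetric] t)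
  also have "\<omega>^(p * (s * t)) = 1" by (simp add: power_mult wp)
  finally have "\<chi> 0 ^ p = 1" using P1 by simp
  from omega_root[OF p0 this] obtain a0 where a0: "a0 < p" "\<chi> 0 = \<omega>^a0" unfolding \<omega>_def by blast
  define a1 where "a1 = (s * z) mod p"
  have a1: "a1 < p" using p0 by (simp add: a1_def)
  have main: "\<xi>' q = \<omega> ^ (a0 + a1 * q) * \<eta> q" if q: "q < p" for q
  proof -
    define j where "j = (q * z) mod p"
    have rj: "r j = q" using inv2[OF q] by (simp add: r_def j_def)
    have cg: "[s * j = a1 * q] (mod p)"
    proof -
      have "(s * j) mod p = (s * (q * z)) mod p" by (simp add: j_def mod_mult_right_eq)
      moreover have "(a1 * q) mod p = (s * z * q) mod p" by (simp add: a1_def mod_mult_left_eq)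
      ultimately show ?thesis by (simp add: cong_def ac_simps)
    qed
    have "\<chi> q = \<omega>^a0 * \<omega>^(s*j)" using chr[of j] rj a0 by simp
    also have "\<omega>^(s*j) = \<omega>^(a1*q)" using omega_cong[OF p0 cg] by (simp add: \<omega>_def)
    finally have "\<chi> q = \<omega>^(a0 + a1*q)" by (simp add: power_add)
    moreover have "\<xi>' q = \<chi> q * \<eta> q" using ce[OF q] by simp
    ultimately show ?thesis by simp
  qed
  have cong: "[e + b * a1 = d] (mod p)"
  proof -
    have ba: "(b * a1) mod p = s mod p"
    proof -
      have "(b * a1) mod p = (s * (b * z)) mod p" by (simp add: a1_def mod_mult_right_eq ac_simps)
      also have "\<dots> = (s * ((b * z) mod p)) mod p" by (simp add: mod_mult_right_eq)
      finally show ?thesis using cz by simp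
    qed
    have es: "e + s = d + p * e" using p0 by (cases p) (auto simp: s_def algebra_simps)
    have "(e + b * a1) mod p = (e + (b * a1) mod p) mod p" by (simp add: mod_add_right_eq)
    also have "\<dots> = (e + s) mod p" using ba by (simp add: mod_add_right_eq)
    also have "\<dots> = d mod p" by (simp add: es)
    finally show ?thesis by (simp add: cong_def)
  qed
  show ?thesis using a0(1) a1 main cong unfolding \<omega>_def by blast
qed




lemma part:
  fixes \<xi> \<xi>' :: "nat \<Rightarrow> complex"
  assumes p: "prime p" "odd p" and b: "0 < b" "b < p" and b': "b' < p"
    and nzx: "\<And>i. i<p \<Longrightarrow> \<xi> i \<noteq> 0" and prx: "(\<Prod>i<p. \<xi> i) = 1" and pr': "(\<Prod>i<p. \<xi>' i) = 1"
    and E: "\<And>i. i<p \<Longrightarrow> omega p ^ d * (\<xi> i * \<xi>' (sh p b i)) = omega p ^ e * (\<xi>' i * \<xi> (sh p b' i))"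
  shows "\<exists>a0 a1. a0 < p \<and> a1 < p \<and>
     mm p \<xi>' b' = Smat p (\<lambda>q. omega p ^ (a0 + a1 * q)) * mm p \<xi> b ^\<^sub>m zdiv p b' b \<and> [e + b * a1 = d] (mod p)"
proof -
  have p0: "p > 0" using prime_gt_0_nat[OF p(1)] .
  have p1: "p > 1" using prime_gt_1_nat[OF p(1)] .
  define k where "k = zdiv p b' b"
  define \<eta> where "\<eta> = pw p \<xi> b k"
  have kb: "(k * b) mod p = b'"
  proof -
    have z: "[b * zinv p b = 1] (mod p)" using zinv_props[OF p(1) b] by blast
    then have cz: "(b * zinv p b) mod p = 1" using p1 by (simp add: cong_def)
    have "(k * b) mod p = (b * k) mod p" by (simp add: mult.commute)
    also have "\<dots> = (b * (b' * zinv p b)) mod p" by (simp add: k_def zdiv_def mod_mult_right_eq)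
    also have "\<dots> = (b' * (b * zinv p b)) mod p" by (simp add: ac_simps)
    also have "\<dots> = (b' * ((b * zinv p b) mod p)) mod p" by (simp add: mod_mult_right_eq)
    finally show ?thesis using cz b' by simp
  qed
  have shk: "sh p (k*b) = sh p b'" by (rule sh_mod) (simp add: kb b')
  have Mk: "mm p \<xi> b ^\<^sub>m k = mm p \<eta> (k*b)" by (simp add: \<eta>_def mm_pow)
  have "mm p \<xi> b * mm p \<xi> b ^\<^sub>m k = mm p \<xi> b ^\<^sub>m k * mm p \<xi> b" by (rule pow_comm[OF mm_carrier])
  then have "mm p \<xi> b * mm p \<eta> (k*b) = mm p \<eta> (k*b) * mm p \<xi> b" by (simp only: Mk)
  then have "mm p (\<lambda>i. \<xi> i * \<eta> (sh p b i)) (b + k*b) = mm p (\<lambda>i. \<eta> i * \<xi> (sh p (k*b) i)) (k*b + b)"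
    by (simp only: mm_mult)
  then have eqF: "mm p (\<lambda>i. \<xi> i * \<eta> (sh p b i)) (b + k*b) = mm p (\<lambda>i. \<eta> i * \<xi> (sh p b' i)) (b + k*b)"
    by (simp only: shk add.commute)
  have F: "\<xi> i * \<eta> (sh p b i) = \<eta> i * \<xi> (sh p b' i)" if "i < p" for i
    using mm_eq[OF eqF that] by simp
  have nzh: "\<eta> i \<noteq> 0" if "i < p" for i unfolding \<eta>_def by (rule pw_nz[OF p0 nzx that])
  have prh: "(\<Prod>i<p. \<eta> i) = 1" unfolding \<eta>_def by (rule pw_prod[OF p0 prx])
  obtain a0 a1 where a: "a0 < p" "a1 < p" "\<forall>q<p. \<xi>' q = omega p ^ (a0 + a1 * q) * \<eta> q"
      "[e + b * a1 = d] (mod p)"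
    using core[OF p b b' nzx nzh pr' prh E F] by blast
  have "Smat p (\<lambda>q. omega p ^ (a0 + a1 * q)) * mm p \<xi> b ^\<^sub>m zdiv p b' b
     = mm p (\<lambda>q. omega p ^ (a0 + a1 * q)) 0 * mm p \<eta> (k*b)"
    by (simp only: Smat_mm Mk k_def[symmetric])
  also have "\<dots> = mm p (\<lambda>i. omega p ^ (a0 + a1 * i) * \<eta> (sh p 0 i)) (0 + k*b)" by (rule mm_mult)
  also have "\<dots> = mm p \<xi>' b'"
    by (rule mm_cong) (use a(3) sh0 kb b' in auto)
  finally have "mm p \<xi>' b' = Smat p (\<lambda>q. omega p ^ (a0 + a1 * q)) * mm p \<xi> b ^\<^sub>m zdiv p b' b" by (rule sym)
  then show ?thesis using a(1,2,4) by blast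
qed

theorem corollary2:
  fixes p m b b' c :: nat and \<xi> \<xi>' :: "nat \<Rightarrow> complex" and M M' :: "complex mat"
  assumes "prime p" and "odd p" and "m \<ge> 1"
    and "Smat p \<xi> \<in> T_tors p (p ^ m)" and "Smat p \<xi>' \<in> T_tors p (p ^ m)"
    and "b < p" and "b' < p" and "c < p"
    and "M = Smat p \<xi> * Xmat p ^\<^sub>m b" and "M' = Smat p \<xi>' * Xmat p ^\<^sub>m b'"
    and "M \<in> K_grp p (T_tors p (p ^ m))" and "M' \<in> K_grp p (T_tors p (p ^ m))"
    and "commutator p M M' = omega p ^ c \<cdot>\<^sub>m 1\<^sub>m p"
  shows "(b = 0 \<and> b' = 0 \<longrightarrow> c = 0)
    \<and> (b \<noteq> 0 \<longrightarrow> (\<exists>a0 a1. a0 < p \<and> a1 < p \<and>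
           M' = Smat p (\<lambda>q. omega p ^ (a0 + a1 * q)) * M ^\<^sub>m zdiv p b' b \<and>
           [int c = - (int b * int a1)] (mod int p)))
    \<and> (b' \<noteq> 0 \<longrightarrow> (\<exists>a0 a1. a0 < p \<and> a1 < p \<and>
           M = Smat p (\<lambda>q. omega p ^ (a0 + a1 * q)) * M' ^\<^sub>m zdiv p b b' \<and>
           [int c = int b' * int a1] (mod int p)))"
proof -
  have p0: "p > 0" using prime_gt_0_nat[OF assms(1)] .
  have tx: "(\<forall>i<p. \<xi> i \<noteq> 0) \<and> (\<Prod>i<p. \<xi> i) = 1" by (rule T_props[OF assms(4)])
  have tx': "(\<forall>i<p. \<xi>' i \<noteq> 0) \<and> (\<Prod>i<p. \<xi>' i) = 1" by (rule T_props[OF assms(5)])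
  have nzx: "\<And>i. i<p \<Longrightarrow> \<xi> i \<noteq> 0" and prx: "(\<Prod>i<p. \<xi> i) = 1" using tx by auto
  have nzx': "\<And>i. i<p \<Longrightarrow> \<xi>' i \<noteq> 0" and prx': "(\<Prod>i<p. \<xi>' i) = 1" using tx' by auto
  have MM: "M = mm p \<xi> b" "M' = mm p \<xi>' b'" using assms(9,10) by (simp_all add: SX_mm)
  have iM: "minv p M \<in> carrier_mat p p \<and> M * minv p M = 1\<^sub>m p \<and> minv p M * M = 1\<^sub>m p"
    unfolding MM(1) by (rule minv_props[OF mm_inv[OF p0 nzx]])
  have iM': "minv p M' \<in> carrier_mat p p \<and> M' * minv p M' = 1\<^sub>m p \<and> minv p M' * M' = 1\<^sub>m p"
    unfolding MM(2) by (rule minv_props[OF mm_inv[OF p0 nzx']])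
  have comm: "M * M' = omega p ^ c \<cdot>\<^sub>m (M' * M)"
    by (rule comm_eq[of M p M']) (use iM iM' assms(13) MM in auto)
  then have eqE: "mm p (\<lambda>i. \<xi> i * \<xi>' (sh p b i)) (b + b') = mm p (\<lambda>i. omega p ^ c * (\<xi>' i * \<xi> (sh p b' i))) (b + b')"
    by (simp only: MM mm_mult smult_mm add.commute)
  have E: "\<xi> i * \<xi>' (sh p b i) = omega p ^ c * (\<xi>' i * \<xi> (sh p b' i))" if "i < p" for i
    using mm_eq[OF eqE that] by simp
  have P1: "c = 0" if "b = 0" "b' = 0"
  proof -
    have "\<xi> 0 * \<xi>' 0 = omega p ^ c * (\<xi>' 0 * \<xi> 0)" using E[OF p0] that sh0[OF p0] by simp
    then have "omega p ^ c = omega p ^ 0" using nzx[OF p0] nzx'[OF p0] by simp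
    then show "c = 0" using omega_inj[OF p0 assms(8) p0] by simp
  qed
  have P2: "\<exists>a0 a1. a0 < p \<and> a1 < p \<and>
           M' = Smat p (\<lambda>q. omega p ^ (a0 + a1 * q)) * M ^\<^sub>m zdiv p b' b \<and>
           [int c = - (int b * int a1)] (mod int p)" if "b \<noteq> 0"
  proof -
    have b0: "0 < b" using that by simp
    have E2: "omega p ^ 0 * (\<xi> i * \<xi>' (sh p b i)) = omega p ^ c * (\<xi>' i * \<xi> (sh p b' i))" if "i < p" for i
      using E[OF that] by simp
    obtain a0 a1 where a: "a0 < p" "a1 < p"
      "mm p \<xi>' b' = Smat p (\<lambda>q. omega p ^ (a0 + a1 * q)) * mm p \<xi> b ^\<^sub>m zdiv p b' b"
      "[c + b * a1 = 0] (mod p)"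
      using part[OF assms(1) assms(2) b0 assms(6) assms(7) nzx prx prx' E2] by blast
    have "[int (c + b * a1) = int 0] (mod int p)" using a(4) by (simp only: cong_int_iff)
    then have "int p dvd (int c + int b * int a1)" by (simp add: cong_0_iff)
    then have "[int c = - (int b * int a1)] (mod int p)" by (simp add: cong_iff_dvd_diff)
    then show ?thesis using a MM by blast
  qed
  have P3: "\<exists>a0 a1. a0 < p \<and> a1 < p \<and>
           M = Smat p (\<lambda>q. omega p ^ (a0 + a1 * q)) * M' ^\<^sub>m zdiv p b b' \<and>
           [int c = int b' * int a1] (mod int p)" if "b' \<noteq> 0"
  proof -
    have b0: "0 < b'" using that by simp
    have E3: "omega p ^ c * (\<xi>' i * \<xi> (sh p b' i)) = omega p ^ 0 * (\<xi> i * \<xi>' (sh p b i))" if "i < p" for i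
      using E[OF that] by simp
    obtain a0 a1 where a: "a0 < p" "a1 < p"
      "mm p \<xi> b = Smat p (\<lambda>q. omega p ^ (a0 + a1 * q)) * mm p \<xi>' b' ^\<^sub>m zdiv p b b'"
      "[0 + b' * a1 = c] (mod p)"
      using part[OF assms(1) assms(2) b0 assms(7) assms(6) nzx' prx' prx E3] by blast
    have "[int (b' * a1) = int c] (mod int p)" using a(4) by (simp only: cong_int_iff) simp
    then have "[int c = int b' * int a1] (mod int p)" by (simp add: cong_sym_eq)
    then show ?thesis using a MM by blast
  qed
  show ?thesis using P1 P2 P3 by blast
qed


end
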